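(* Let $\mathcal{G}\subset\mathcal{S}$ with harmonic analogue $\mathcal{G}_H^0$. Then $\mathcal{G}$ is compact (with respect to the topology of locally uniform convergence in $\mathbb{D}$) if and only if $\mathcal{G}_H^0$ is compact.
   Context: $\mathbb{D}$ is the open unit disk. $\mathcal{S}$ is the class of analytic univalent functions $f$ in $\mathbb{D}$ with $f(0)=0$, $f'(0)=1$. For $\mathcal{G}\subset\mathcal{S}$, its harmonic analogue $\mathcal{G}_H^0$ is the class of harmonic functions $f=h+\bar g$ ($h,g$ analytic in $\mathbb{D}$) such that $h+\epsilon g\in\mathcal{G}$ for every $\epsilon\in\mathbb{C}$ with $|\epsilon|=1$. *)

theory Defs
  imports "HOL-Complex_Analysis.Complex_Analysis"
begin

abbreviation unit_disk :: "complex set" where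
  "unit_disk \<equiv> ball 0 1"

definition class_S :: "(complex \<Rightarrow> complex) set" where
  "class_S = {f. f holomorphic_on unit_disk \<and> inj_on f unit_disk \<and> f 0 = 0 \<and> deriv f 0 = 1}"

definition harmonic_analogue :: "(complex \<Rightarrow> complex) set \<Rightarrow> (complex \<Rightarrow> complex) set" where
  "harmonic_analogue G = {f. \<exists>h g. h holomorphic_on unit_disk \<and> g holomorphic_on unit_disk \<and>
      (\<forall>z\<in>unit_disk. f z = h z + cnj (g z)) \<and>
      (\<forall>\<epsilon>::complex. norm \<epsilon> = 1 \<longrightarrow>
          (\<exists>\<phi>\<in>G. \<forall>z\<in>unit_disk. \<phi> z = h z + \<epsilon> * g z))}"

definition lu_topology :: "(complex \<Rightarrow> complex) topology" where
  "lu_topology = topology (\<lambda>U. \<forall>f\<in>U. \<exists>K e. compact K \<and> K \<subseteq> unit_disk \<and> e > 0 \<and>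
      {g. \<forall>z\<in>K. dist (g z) (f z) < e} \<subseteq> U)"

end

theory Submission
  imports Defs
begin


definition lu_open :: "(complex \<Rightarrow> complex) set \<Rightarrow> bool" where
 "lu_open = (\<lambda>U. \<forall>f\<in>U. \<exists>K e. compact K \<and> K \<subseteq> unit_disk \<and> e > 0 \<and>
      {g. \<forall>z\<in>K. dist (g z) (f z) < e} \<subseteq> U)"

lemma lu_openD: assumes "lu_open U" "f \<in> U"
  shows "\<exists>K e. compact K \<and> K \<subseteq> unit_disk \<and> e > 0 \<and> {g. \<forall>z\<in>K. dist (g z) (f z) < e} \<subseteq> U"
  using assms unfolding lu_open_def by (rule bspec)

lemma lu_openI: assumes "\<And>f. f \<in> U \<Longrightarrow> \<exists>K e. compact K \<and> K \<subseteq> unit_disk \<and> e > 0 \<and> {g. \<forall>z\<in>K. dist (g z) (f z) < e} \<subseteq> U"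
  shows "lu_open U"
  unfolding lu_open_def using assms by (rule ballI)

lemma istop_lu: "istopology lu_open"
  unfolding istopology_def
proof (intro conjI allI impI)
  fix S T assume S: "lu_open S" and T: "lu_open T"
  show "lu_open (S \<inter> T)"
  proof (rule lu_openI)
    fix f assume f: "f \<in> S \<inter> T"
    then have fS: "f \<in> S" and fT: "f \<in> T" by auto
    obtain K1 e1 where 1: "compact K1" "K1 \<subseteq> unit_disk" "e1 > 0" "{g. \<forall>z\<in>K1. dist (g z) (f z) < e1} \<subseteq> S"
      using lu_openD[OF S fS] by blast
    obtain K2 e2 where 2: "compact K2" "K2 \<subseteq> unit_disk" "e2 > 0" "{g. \<forall>z\<in>K2. dist (g z) (f z) < e2} \<subseteq> T"
      using lu_openD[OF T fT] by blast
    have sub: "{g. \<forall>z\<in>K1 \<union> K2. dist (g z) (f z) < min e1 e2} \<subseteq> S \<inter> T"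
    proof
      fix g assume g: "g \<in> {g. \<forall>z\<in>K1 \<union> K2. dist (g z) (f z) < min e1 e2}"
      have "\<forall>z\<in>K1. dist (g z) (f z) < e1"
      proof
        fix z assume "z \<in> K1" then have "dist (g z) (f z) < min e1 e2" using g by blast
        then show "dist (g z) (f z) < e1" by linarith
      qed
      moreover have "\<forall>z\<in>K2. dist (g z) (f z) < e2"
      proof
        fix z assume "z \<in> K2" then have "dist (g z) (f z) < min e1 e2" using g by blast
        then show "dist (g z) (f z) < e2" by linarith
      qed
      ultimately have "g \<in> {g. \<forall>z\<in>K1. dist (g z) (f z) < e1}" "g \<in> {g. \<forall>z\<in>K2. dist (g z) (f z) < e2}"
        by auto
      then show "g \<in> S \<inter> T" using 1(4) 2(4) by blast
    qed
    have "compact (K1 \<union> K2)" using 1(1) 2(1) by (rule compact_Un)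
    moreover have "K1 \<union> K2 \<subseteq> unit_disk" using 1(2) 2(2) by blast
    moreover have "min e1 e2 > 0" using 1(3) 2(3) by simp
    ultimately show "\<exists>K e. compact K \<and> K \<subseteq> unit_disk \<and> e > 0 \<and> {g. \<forall>z\<in>K. dist (g z) (f z) < e} \<subseteq> S \<inter> T"
      using sub by (intro exI[of _ "K1 \<union> K2"] exI[of _ "min e1 e2"] conjI)
  qed
next
  fix KK :: "(complex \<Rightarrow> complex) set set" assume KK: "\<forall>K\<in>KK. lu_open K"
  show "lu_open (\<Union>KK)"
  proof (rule lu_openI)
    fix f assume "f \<in> \<Union>KK"
    then obtain K0 where K0: "K0 \<in> KK" "f \<in> K0" by blast
    have "lu_open K0" using KK K0(1) by blast
    then obtain K e where Ke: "compact K" "K \<subseteq> unit_disk" "e > 0" "{g. \<forall>z\<in>K. dist (g z) (f z) < e} \<subseteq> K0"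
      using lu_openD[OF \<open>lu_open K0\<close> K0(2)] by blast
    have "{g. \<forall>z\<in>K. dist (g z) (f z) < e} \<subseteq> \<Union>KK" using Ke(4) K0(1) by blast
    then show "\<exists>K e. compact K \<and> K \<subseteq> unit_disk \<and> e > 0 \<and> {g. \<forall>z\<in>K. dist (g z) (f z) < e} \<subseteq> \<Union>KK"
      using Ke(1-3) by (intro exI[of _ K] exI[of _ e] conjI)
  qed
qed

lemma openin_lu: "openin lu_topology U \<longleftrightarrow> lu_open U"
proof -
  have 1: "lu_topology = topology lu_open" by (simp add: lu_topology_def lu_open_def)
  have 2: "openin (topology lu_open) = lu_open" using istop_lu by (rule topology_inverse')
  show ?thesis unfolding 1 2 ..
qed

lemma topspace_lu [simp]: "topspace lu_topology = UNIV"
proof -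
  have "openin lu_topology UNIV" unfolding openin_lu lu_open_def
    by (intro ballI exI[of _ "{}"] exI[of _ "1::real"]) auto
  then show ?thesis using openin_subset by blast
qed

lemma lu_openE:
  assumes "openin lu_topology U" "f \<in> U"
  obtains K e where "compact K" "K \<subseteq> unit_disk" "e > 0"
    "\<And>g. (\<forall>z\<in>K. dist (g z) (f z) < e) \<Longrightarrow> g \<in> U"
proof -
  have "lu_open U" using assms(1) openin_lu by blast
  then obtain K e where K: "compact K" "K \<subseteq> unit_disk" "e > 0" "{g. \<forall>z\<in>K. dist (g z) (f z) < e} \<subseteq> U"
    using lu_openD[OF _ assms(2)] by blast
  show ?thesis
  proof (rule that[OF K(1-3)])
    fix g assume "\<forall>z\<in>K. dist (g z) (f z) < e"
    then show "g \<in> U" using K(4) by blast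
  qed
qed

definition bl :: "(complex \<Rightarrow> complex) \<Rightarrow> complex set \<Rightarrow> real \<Rightarrow> (complex \<Rightarrow> complex) set" where
  "bl f K e = {g. \<exists>d<e. \<forall>z\<in>K. dist (g z) (f z) \<le> d}"

lemma bl_open: assumes "compact K" "K \<subseteq> unit_disk" shows "openin lu_topology (bl f K e)"
  unfolding openin_lu lu_open_def
proof
  fix g assume "g \<in> bl f K e"
  then obtain d where d: "d < e" "\<forall>z\<in>K. dist (g z) (f z) \<le> d" by (auto simp: bl_def)
  have "{h. \<forall>z\<in>K. dist (h z) (g z) < (e - d)/2} \<subseteq> bl f K e"
  proof
    fix h assume h: "h \<in> {h. \<forall>z\<in>K. dist (h z) (g z) < (e - d)/2}"
    have "\<forall>z\<in>K. dist (h z) (f z) \<le> d + (e-d)/2"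
    proof
      fix z assume "z \<in> K"
      then have "dist (h z) (g z) < (e-d)/2" "dist (g z) (f z) \<le> d" using h d by auto
      then show "dist (h z) (f z) \<le> d + (e-d)/2" using dist_triangle[of "h z" "f z" "g z"] by linarith
    qed
    moreover have "d + (e-d)/2 < e" using d by (simp add: field_simps)
    ultimately show "h \<in> bl f K e" unfolding bl_def by blast
  qed
  then show "\<exists>K' e'. compact K' \<and> K' \<subseteq> unit_disk \<and> e' > 0 \<and> {h. \<forall>z\<in>K'. dist (h z) (g z) < e'} \<subseteq> bl f K e"
    using assms d by (intro exI[of _ K] exI[of _ "(e-d)/2"]) auto
qed

lemma bl_center: "0 < e \<Longrightarrow> f \<in> bl f K e"
  unfolding bl_def by (rule CollectI, rule exI[of _ 0]) auto

lemma bl_lt: "g \<in> bl f K e \<Longrightarrow> z \<in> K \<Longrightarrow> dist (g z) (f z) < e"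
  unfolding bl_def by force

definition agr :: "(complex \<Rightarrow> complex) \<Rightarrow> (complex \<Rightarrow> complex) \<Rightarrow> bool" where
  "agr f g \<longleftrightarrow> (\<forall>z\<in>unit_disk. f z = g z)"

definition sat :: "(complex \<Rightarrow> complex) set \<Rightarrow> (complex \<Rightarrow> complex) set" where
  "sat A = {f. \<exists>g\<in>A. agr f g}"

lemma agr_refl [simp]: "agr f f" by (simp add: agr_def)
lemma agr_sym: "agr f g \<Longrightarrow> agr g f" by (simp add: agr_def)
lemma sat_sup: "A \<subseteq> sat A"
proof
  fix x assume "x \<in> A" then show "x \<in> sat A" unfolding sat_def using agr_refl by blast
qed

lemma open_sat: assumes "openin lu_topology U" "g \<in> U" "agr f g" shows "f \<in> U"
proof -
  obtain K e where K: "compact K" "K \<subseteq> unit_disk" "e > 0"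
    "\<And>h. (\<forall>z\<in>K. dist (h z) (g z) < e) \<Longrightarrow> h \<in> U"
    using lu_openE[OF assms(1,2)] by metis
  have "\<forall>z\<in>K. dist (f z) (g z) < e" using K(2,3) assms(3) unfolding agr_def by auto
  then show ?thesis by (rule K(4))
qed

lemma compact_transfer:
  assumes cA: "compactin lu_topology A" and BA: "B \<subseteq> sat A" and AB: "A \<subseteq> sat B"
  shows "compactin lu_topology B"
  unfolding compactin_def
proof (intro conjI allI impI)
  show "B \<subseteq> topspace lu_topology" by simp
  fix U assume U: "(\<forall>X\<in>U. openin lu_topology X) \<and> B \<subseteq> \<Union> U"
  have Uo: "\<And>X. X \<in> U \<Longrightarrow> openin lu_topology X" using U by blast
  have "A \<subseteq> \<Union>U"
  proof
    fix a assume "a \<in> A"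
    then obtain b where b: "b \<in> B" "agr a b" using AB unfolding sat_def by blast
    then obtain X where X: "X \<in> U" "b \<in> X" using U by blast
    have "a \<in> X" by (rule open_sat[OF Uo[OF X(1)] X(2) b(2)])
    then show "a \<in> \<Union>U" using X(1) by blast
  qed
  then have "\<exists>F. finite F \<and> F \<subseteq> U \<and> A \<subseteq> \<Union>F"
    using cA Uo unfolding compactin_def by blast
  then obtain F where F: "finite F" "F \<subseteq> U" "A \<subseteq> \<Union>F" by blast
  have "B \<subseteq> \<Union>F"
  proof
    fix b assume "b \<in> B"
    then obtain a where a: "a \<in> A" "agr b a" using BA unfolding sat_def by blast
    then obtain X where X: "X \<in> F" "a \<in> X" using F by blast
    have "X \<in> U" using X(1) F(2) by blast
    then have "b \<in> X" using open_sat[OF Uo X(2) a(2)] by blast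
    then show "b \<in> \<Union>F" using X(1) by blast
  qed
  then show "\<exists>F. finite F \<and> F \<subseteq> U \<and> B \<subseteq> \<Union> F" using F by blast
qed




lemma sat_closed: assumes cA: "compactin lu_topology A" shows "closedin lu_topology (sat A)"
proof -
  have "lu_open (UNIV - sat A)" unfolding lu_open_def
  proof
    fix f assume f: "f \<in> UNIV - sat A"
    have "\<forall>a\<in>A. \<exists>z. z \<in> unit_disk \<and> a z \<noteq> f z"
    proof
      fix a assume a: "a \<in> A"
      show "\<exists>z. z \<in> unit_disk \<and> a z \<noteq> f z"
      proof (rule ccontr)
        assume "\<not> ?thesis"
        then have "agr f a" unfolding agr_def by auto
        then have "f \<in> sat A" using a unfolding sat_def by blast
        then show False using f by blast
      qed
    qed
    then obtain zz where zz0: "\<forall>a\<in>A. zz a \<in> unit_disk \<and> a (zz a) \<noteq> f (zz a)"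
      using bchoice[of A "\<lambda>a z. z \<in> unit_disk \<and> a z \<noteq> f z"] by blast
    have zz: "\<And>a. a \<in> A \<Longrightarrow> zz a \<in> unit_disk \<and> a (zz a) \<noteq> f (zz a)" using zz0 by blast
    define d where "d a = dist (a (zz a)) (f (zz a)) / 2" for a
    have dpos: "a \<in> A \<Longrightarrow> d a > 0" for a using zz[of a] by (simp add: d_def)
    have "A \<subseteq> \<Union>((\<lambda>a. bl a {zz a} (d a)) ` A)" using bl_center dpos by blast
    moreover have "\<forall>X\<in>(\<lambda>a. bl a {zz a} (d a)) ` A. openin lu_topology X"
    proof
      fix X assume "X \<in> (\<lambda>a. bl a {zz a} (d a)) ` A"
      then obtain a where "a \<in> A" "X = bl a {zz a} (d a)" by blast
      then show "openin lu_topology X" using zz[of a] bl_open[of "{zz a}" a "d a"] by simp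
    qed
    ultimately have "\<exists>F. finite F \<and> F \<subseteq> (\<lambda>a. bl a {zz a} (d a)) ` A \<and> A \<subseteq> \<Union>F"
      using cA unfolding compactin_def by blast
    then obtain F where F: "finite F" "F \<subseteq> (\<lambda>a. bl a {zz a} (d a)) ` A" "A \<subseteq> \<Union>F"
      by blast
    obtain A0 where A0: "A0 \<subseteq> A" "finite A0" "F = (\<lambda>a. bl a {zz a} (d a)) ` A0"
      using finite_subset_image[OF F(1,2)] by blast
    define e where "e = (if A0 = {} then 1 else Min (d ` A0))"
    have epos: "e > 0"
    proof (cases "A0 = {}")
      case False
      then have "Min (d ` A0) \<in> d ` A0" using A0 by (intro Min_in) auto
      then show ?thesis using False A0 dpos unfolding e_def by auto
    qed (simp add: e_def)
    have ele: "a \<in> A0 \<Longrightarrow> e \<le> d a" for a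
    proof -
      assume "a \<in> A0"
      then have "A0 \<noteq> {}" "Min (d ` A0) \<le> d a" using A0 by auto
      then show ?thesis unfolding e_def by simp
    qed
    have "{g. \<forall>z\<in>zz ` A0. dist (g z) (f z) < e} \<subseteq> UNIV - sat A"
    proof
      fix g assume g: "g \<in> {g. \<forall>z\<in>zz ` A0. dist (g z) (f z) < e}"
      have "g \<notin> sat A"
      proof
        assume "g \<in> sat A"
        then obtain a' where a': "a' \<in> A" "agr g a'" unfolding sat_def by auto
        then obtain a where a: "a \<in> A0" "a' \<in> bl a {zz a} (d a)" using F A0 by auto
        define w where "w = zz a"
        have w: "w \<in> unit_disk" "a w \<noteq> f w" using zz A0 a by (auto simp: w_def)
        have 1: "dist (a' w) (a w) < d a" using bl_lt[OF a(2)] by (simp add: w_def)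
        have 2: "dist (g w) (f w) < d a" using g a ele[of a] by (auto simp: w_def)
        have 3: "g w = a' w" using a' w unfolding agr_def by auto
        have "dist (a w) (f w) \<le> dist (a' w) (a w) + dist (a' w) (f w)" by (rule dist_triangle3)
        also have "\<dots> < 2 * d a" using 1 2 3 by simp
        finally show False by (simp add: d_def w_def)
      qed
      then show "g \<in> UNIV - sat A" by simp
    qed
    moreover have "compact (zz ` A0)" using A0 by (simp add: finite_imp_compact)
    moreover have "zz ` A0 \<subseteq> unit_disk" using zz A0 by auto
    ultimately show "\<exists>K e. compact K \<and> K \<subseteq> unit_disk \<and> e > 0 \<and>
      {g. \<forall>z\<in>K. dist (g z) (f z) < e} \<subseteq> UNIV - sat A" using epos by blast
  qed
  then show ?thesis unfolding closedin_def openin_lu by simp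
qed


lemma cont_lip:
  fixes M :: "complex \<Rightarrow> complex \<Rightarrow> complex"
  assumes C: "C > 0" and L: "\<And>x y x' y'. dist (M x y) (M x' y') \<le> C * (dist x x' + dist y y')"
  shows "continuous_map (prod_topology lu_topology lu_topology) lu_topology
           (\<lambda>p. (\<lambda>z. M (fst p z) (snd p z)))"
  unfolding continuous_map_def
proof (intro conjI allI impI)
  show "(\<lambda>p. (\<lambda>z. M (fst p z) (snd p z))) \<in> topspace (prod_topology lu_topology lu_topology) \<rightarrow> topspace lu_topology"
    by simp
  fix U assume U: "openin lu_topology U"
  show "openin (prod_topology lu_topology lu_topology)
     {x \<in> topspace (prod_topology lu_topology lu_topology). (\<lambda>z. M (fst x z) (snd x z)) \<in> U}"
    unfolding openin_prod_topology_alt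
  proof (intro allI impI)
    fix a b assume ab: "(a, b) \<in> {x \<in> topspace (prod_topology lu_topology lu_topology). (\<lambda>z. M (fst x z) (snd x z)) \<in> U}"
    then have "(\<lambda>z. M (a z) (b z)) \<in> U" by simp
    then obtain K e where K: "compact K" "K \<subseteq> unit_disk" "e > 0"
       "\<And>g. (\<forall>z\<in>K. dist (g z) (M (a z) (b z)) < e) \<Longrightarrow> g \<in> U"
      using lu_openE[OF U, of "\<lambda>z. M (a z) (b z)"] by auto
    have "bl a K (e/(2*C)) \<times> bl b K (e/(2*C)) \<subseteq> {x \<in> topspace (prod_topology lu_topology lu_topology). (\<lambda>z. M (fst x z) (snd x z)) \<in> U}"
    proof
      fix p assume p: "p \<in> bl a K (e/(2*C)) \<times> bl b K (e/(2*C))"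
      obtain d1 where d1: "d1 < e/(2*C)" "\<forall>z\<in>K. dist (fst p z) (a z) \<le> d1" using p by (auto simp: bl_def)
      obtain d2 where d2: "d2 < e/(2*C)" "\<forall>z\<in>K. dist (snd p z) (b z) \<le> d2" using p by (auto simp: bl_def)
      have "\<forall>z\<in>K. dist (M (fst p z) (snd p z)) (M (a z) (b z)) < e"
      proof
        fix z assume z: "z \<in> K"
        have "dist (M (fst p z) (snd p z)) (M (a z) (b z)) \<le> C * (dist (fst p z) (a z) + dist (snd p z) (b z))"
          by (rule L)
        also have "\<dots> \<le> C * (d1 + d2)"
        proof (rule mult_left_mono)
          have "dist (fst p z) (a z) \<le> d1" using d1(2) z by blast
          moreover have "dist (snd p z) (b z) \<le> d2" using d2(2) z by blast
          ultimately show "dist (fst p z) (a z) + dist (snd p z) (b z) \<le> d1 + d2" by linarith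
        qed (use C in linarith)
        also have "\<dots> < C * (e/C)"
        proof (rule mult_strict_left_mono)
          have "e/(2*C) + e/(2*C) = e/C" using C by (simp add: field_simps)
          then show "d1 + d2 < e/C" using d1(1) d2(1) by linarith
        qed (use C in linarith)
        also have "\<dots> = e" using C by simp
        finally show "dist (M (fst p z) (snd p z)) (M (a z) (b z)) < e" .
      qed
      then have "(\<lambda>z. M (fst p z) (snd p z)) \<in> U" by (rule K(4))
      then show "p \<in> {x \<in> topspace (prod_topology lu_topology lu_topology). (\<lambda>z. M (fst x z) (snd x z)) \<in> U}"
        by simp
    qed
    moreover have "a \<in> bl a K (e/(2*C))" "b \<in> bl b K (e/(2*C))" using K C by (auto intro!: bl_center)
    ultimately show "\<exists>V W. openin lu_topology V \<and> openin lu_topology W \<and> a \<in> V \<and> b \<in> W \<and> V \<times> W \<subseteq>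
       {x \<in> topspace (prod_topology lu_topology lu_topology). (\<lambda>z. M (fst x z) (snd x z)) \<in> U}"
      using bl_open[OF K(1,2), of a "e/(2*C)"] bl_open[OF K(1,2), of b "e/(2*C)"] by blast
  qed
qed




lemma real_holo_const:
  assumes hol: "u holomorphic_on unit_disk" and re: "\<And>z. z \<in> unit_disk \<Longrightarrow> Im (u z) = 0"
    and z: "z \<in> unit_disk"
  shows "u z = u 0"
proof -
  have "u constant_on unit_disk"
  proof (rule ccontr)
    assume nc: "\<not> u constant_on unit_disk"
    have "open (u ` unit_disk)"
      by (rule open_mapping_thm[OF hol open_ball connected_ball open_ball order_refl nc])
    moreover have "u 0 \<in> u ` unit_disk" by simp
    ultimately obtain r where r: "r > 0" "ball (u 0) r \<subseteq> u ` unit_disk"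
      using open_contains_ball by blast
    have "u 0 + \<i> * of_real (r/2) \<in> ball (u 0) r" using r(1) by (simp add: dist_norm norm_mult)
    then obtain x where x: "x \<in> unit_disk" "u 0 + \<i> * of_real (r/2) = u x" using r(2) by blast
    have "Im (u x) = r/2 + Im (u 0)" using arg_cong[OF x(2), of Im] by simp
    moreover have "Im (u x) = 0" "Im (u 0) = 0" using re x(1) by auto
    ultimately show False using r(1) by simp
  qed
  then obtain y where y: "\<forall>x\<in>unit_disk. u x = y" unfolding constant_on_def by blast
  then show ?thesis using z by simp
qed

lemma closure_holo:
  assumes GS: "G \<subseteq> class_S" and f: "f \<in> lu_topology closure_of G"
  shows "f holomorphic_on unit_disk"
proof -
  define B where "B = {b :: complex set \<times> real. compact (fst b) \<and> fst b \<subseteq> unit_disk \<and> snd b > 0}"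
  define N where "N = (\<lambda>b::complex set \<times> real. {\<phi>\<in>G. \<forall>z\<in>fst b. dist (\<phi> z) (f z) < snd b})"
  define F where "F = (INF b\<in>B. principal (N b))"
  have evF: "eventually P F \<longleftrightarrow> (\<exists>b\<in>B. \<forall>\<phi>\<in>N b. P \<phi>)" for P
  proof -
    have "eventually P F \<longleftrightarrow> (\<exists>b\<in>B. eventually P (principal (N b)))"
      unfolding F_def
    proof (rule eventually_INF_base)
      have "({}, 1) \<in> B" unfolding B_def by simp
      then show "B \<noteq> {}" by blast
    next
      fix a b assume ab: "a \<in> B" "b \<in> B"
      define x where "x = (fst a \<union> fst b, min (snd a) (snd b))"
      have "x \<in> B" using ab unfolding B_def x_def by (auto intro: compact_Un)
      moreover have "N x \<subseteq> N a \<inter> N b" unfolding N_def x_def by auto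
      then have "principal (N x) \<le> inf (principal (N a)) (principal (N b))"
        by (simp add: inf_principal)
      ultimately show "\<exists>x\<in>B. principal (N x) \<le> inf (principal (N a)) (principal (N b))" by blast
    qed
    then show ?thesis by (simp add: eventually_principal)
  qed
  have nontriv: "\<not> trivial_limit F"
  proof
    assume "trivial_limit F"
    then have "eventually (\<lambda>_. False) F" by (simp add: trivial_limit_def)
    then have "\<exists>b\<in>B. \<forall>\<phi>\<in>N b. False" using evF[of "\<lambda>_. False"] by simp
    then obtain b where b: "b \<in> B" "N b = {}" by blast
    have K: "compact (fst b)" "fst b \<subseteq> unit_disk" "snd b > 0" using b(1) unfolding B_def by auto
    have "openin lu_topology (bl f (fst b) (snd b))" by (rule bl_open[OF K(1,2)])
    moreover have "f \<in> bl f (fst b) (snd b)" using K(3) by (rule bl_center)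
    moreover have "\<forall>T. f \<in> T \<and> openin lu_topology T \<longrightarrow> (\<exists>y. y \<in> G \<and> y \<in> T)"
      using f unfolding in_closure_of by simp
    ultimately obtain y where y: "y \<in> G" "y \<in> bl f (fst b) (snd b)"
      by meson
    have "y \<in> N b" unfolding N_def using y bl_lt[OF y(2)] by blast
    then show False using b(2) by blast
  qed
  have diffs: "f field_differentiable (at z)" if z: "z \<in> unit_disk" for z
  proof -
    define r where "r = (1 - norm z) / 2"
    have r: "r > 0" using z by (simp add: r_def)
    have cb: "cball z r \<subseteq> unit_disk"
    proof
      fix w assume "w \<in> cball z r"
      then have "norm (w - z) \<le> r" by (simp add: dist_norm norm_minus_commute)
      moreover have "norm w \<le> norm z + norm (w - z)" using norm_triangle_ineq[of z "w - z"] by simp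
      ultimately have "norm w < 1" using z unfolding r_def by simp
      then show "w \<in> unit_disk" by simp
    qed
    have bB: "(cball z r, e) \<in> B" if "e > 0" for e using cb that unfolding B_def by simp
    have ev: "eventually (\<lambda>\<phi>. continuous_on (cball z r) ((\<lambda>\<phi>. \<phi>) \<phi>) \<and> ((\<lambda>\<phi>. \<phi>) \<phi>) holomorphic_on ball z r) F"
      unfolding evF
    proof (rule bexI[OF _ bB[of 1]])
      show "\<forall>\<phi>\<in>N (cball z r, 1). continuous_on (cball z r) ((\<lambda>\<phi>. \<phi>) \<phi>) \<and> ((\<lambda>\<phi>. \<phi>) \<phi>) holomorphic_on ball z r"
      proof
        fix \<phi> assume "\<phi> \<in> N (cball z r, 1)"
        then have "\<phi> \<in> class_S" using GS unfolding N_def by auto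
        then have h: "\<phi> holomorphic_on unit_disk" unfolding class_S_def by blast
        have "continuous_on (cball z r) \<phi>"
          using holomorphic_on_imp_continuous_on[OF holomorphic_on_subset[OF h cb]] .
        moreover have "\<phi> holomorphic_on ball z r"
        proof -
          have "ball z r \<subseteq> unit_disk" using cb ball_subset_cball by (rule order_trans[rotated])
          then show ?thesis by (rule holomorphic_on_subset[OF h])
        qed
        ultimately show "continuous_on (cball z r) ((\<lambda>\<phi>. \<phi>) \<phi>) \<and> ((\<lambda>\<phi>. \<phi>) \<phi>) holomorphic_on ball z r" by simp
      qed
    qed simp
    have ul: "uniform_limit (cball z r) (\<lambda>\<phi>. \<phi>) f F"
      unfolding uniform_limit_iff
    proof (intro allI impI)
      fix e :: real assume e: "e > 0"
      show "\<forall>\<^sub>F n in F. \<forall>x\<in>cball z r. dist (n x) (f x) < e"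
        unfolding evF
      proof (rule bexI[OF _ bB[OF e]])
        show "\<forall>n\<in>N (cball z r, e). \<forall>x\<in>cball z r. dist (n x) (f x) < e"
          unfolding N_def by simp
      qed
    qed
    have "continuous_on (cball z r) f \<and> f holomorphic_on ball z r"
      by (rule holomorphic_uniform_limit[OF ev ul nontriv]) (rule conjI)
    then have "f holomorphic_on ball z r" by (rule conjunct2)
    then show ?thesis
      using holomorphic_on_imp_differentiable_at[of f "ball z r" z] r open_ball[of z r] by simp
  qed
  show ?thesis unfolding holomorphic_on_def
  proof
    fix x assume "x \<in> unit_disk"
    then have "f field_differentiable (at x)" by (rule diffs)
    then show "f field_differentiable (at x within unit_disk)" by (rule field_differentiable_at_within)
  qed
qed




lemma lip_eps:
  fixes c :: complex assumes c: "norm c = 1"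
  shows "dist ((x+y)/2 + c*((x-y)/2)) ((x'+y')/2 + c*((x'-y')/2)) \<le> 1 * (dist x x' + dist y y')"
proof -
  define a where "a = x - x'"
  define b where "b = y - y'"
  have eq: "(x+y)/2 + c*((x-y)/2) - ((x'+y')/2 + c*((x'-y')/2)) = (a+b)/2 + c*((a-b)/2)"
    unfolding a_def b_def by (simp add: algebra_simps add_divide_distrib diff_divide_distrib)
  have "norm ((a+b)/2 + c*((a-b)/2)) \<le> norm ((a+b)/2) + norm (c*((a-b)/2))"
    by (rule norm_triangle_ineq)
  also have "\<dots> = norm (a+b)/2 + norm (a-b)/2" using c by (simp add: norm_mult norm_divide)
  also have "\<dots> \<le> norm a + norm b"
  proof -
    have "norm (a+b) + norm (a-b) \<le> 2*(norm a + norm b)"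
      using add_mono[OF norm_triangle_ineq[of a b] norm_triangle_ineq4[of a b]] by simp
    then show ?thesis by (simp add: field_simps)
  qed
  finally show ?thesis unfolding dist_norm eq a_def b_def by simp
qed

lemma lip_cnj:
  shows "dist ((x+y)/2 + cnj ((x-y)/2)) ((x'+y')/2 + cnj ((x'-y')/2)) \<le> 1 * (dist x x' + dist y y')"
proof -
  define a where "a = x - x'"
  define b where "b = y - y'"
  have eq: "(x+y)/2 + cnj ((x-y)/2) - ((x'+y')/2 + cnj ((x'-y')/2)) = (a+b)/2 + cnj ((a-b)/2)"
    unfolding a_def b_def by (simp add: algebra_simps add_divide_distrib diff_divide_distrib)
  have "norm ((a+b)/2 + cnj ((a-b)/2)) \<le> norm ((a+b)/2) + norm (cnj ((a-b)/2))"
    by (rule norm_triangle_ineq)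
  also have "\<dots> = norm (a+b)/2 + norm (a-b)/2" by (simp add: norm_divide flip: complex_cnj_diff)
  also have "\<dots> \<le> norm a + norm b"
  proof -
    have "norm (a+b) + norm (a-b) \<le> 2*(norm a + norm b)"
      using add_mono[OF norm_triangle_ineq[of a b] norm_triangle_ineq4[of a b]] by simp
    then show ?thesis by (simp add: field_simps)
  qed
  finally show ?thesis unfolding dist_norm eq a_def b_def by simp
qed

lemma GH_agr: assumes "f' \<in> harmonic_analogue G" "agr f f'" shows "f \<in> harmonic_analogue G"
proof -
  obtain h g where hg: "h holomorphic_on unit_disk" "g holomorphic_on unit_disk"
      "\<forall>z\<in>unit_disk. f' z = h z + cnj (g z)"
      "\<forall>\<epsilon>::complex. norm \<epsilon> = 1 \<longrightarrow> (\<exists>\<phi>\<in>G. \<forall>z\<in>unit_disk. \<phi> z = h z + \<epsilon> * g z)"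
    using assms(1) unfolding harmonic_analogue_def by blast
  have "\<forall>z\<in>unit_disk. f z = h z + cnj (g z)" using hg(3) assms(2) unfolding agr_def by simp
  then show ?thesis unfolding harmonic_analogue_def using hg(1,2,4) by blast
qed

lemma key_in_sat:
  assumes GS: "G \<subseteq> class_S" and fH: "f \<in> harmonic_analogue G" and hol: "f holomorphic_on unit_disk"
  shows "f \<in> sat G"
proof -
  obtain h g where hh: "h holomorphic_on unit_disk" and hg: "g holomorphic_on unit_disk"
      and fz: "\<forall>z\<in>unit_disk. f z = h z + cnj (g z)"
      and eps: "\<forall>\<epsilon>::complex. norm \<epsilon> = 1 \<longrightarrow> (\<exists>\<phi>\<in>G. \<forall>z\<in>unit_disk. \<phi> z = h z + \<epsilon> * g z)"
    using fH unfolding harmonic_analogue_def by blast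
  have "(\<lambda>z. f z - h z) holomorphic_on unit_disk" using hol hh by (rule holomorphic_on_diff)
  then have cg: "(\<lambda>z. cnj (g z)) holomorphic_on unit_disk"
    by (rule holomorphic_transform) (simp add: fz)
  have u1: "(\<lambda>z. g z + cnj (g z)) holomorphic_on unit_disk" using hg cg by (rule holomorphic_on_add)
  have u2: "(\<lambda>z. \<i> * (g z - cnj (g z))) holomorphic_on unit_disk"
    using hg cg by (intro holomorphic_on_mult holomorphic_on_diff holomorphic_on_const)
  have c1: "g z + cnj (g z) = g 0 + cnj (g 0)" if "z \<in> unit_disk" for z
    using real_holo_const[OF u1 _ that] by simp
  have c2: "\<i> * (g z - cnj (g z)) = \<i> * (g 0 - cnj (g 0))" if "z \<in> unit_disk" for z
    using real_holo_const[OF u2 _ that] by simp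
  have rep: "g w = ((g w + cnj (g w)) - \<i> * (\<i> * (g w - cnj (g w)))) / 2" for w
    by (simp add: algebra_simps)
  have gc: "g z = g 0" if "z \<in> unit_disk" for z
    using rep[of z] rep[of 0] c1[OF that] c2[OF that] by simp
  obtain \<phi>1 where p1: "\<phi>1 \<in> G" "\<forall>z\<in>unit_disk. \<phi>1 z = h z + 1 * g z" using eps[rule_format, of 1] by auto
  obtain \<phi>2 where p2: "\<phi>2 \<in> G" "\<forall>z\<in>unit_disk. \<phi>2 z = h z + (-1) * g z"
    using eps[rule_format, of "-1"] by auto
  have "\<phi>1 0 = 0" "\<phi>2 0 = 0" using p1(1) p2(1) GS unfolding class_S_def by auto
  then have "h 0 + g 0 = 0" "h 0 - g 0 = 0" using p1(2) p2(2) by auto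
  then have g0: "g 0 = 0" by (simp add: algebra_simps)
  have "agr f \<phi>1" unfolding agr_def
  proof
    fix z assume z: "z \<in> unit_disk"
    then show "f z = \<phi>1 z" using fz p1(2) gc[OF z] g0 by simp
  qed
  then show ?thesis unfolding sat_def using p1(1) by blast
qed




theorem theorem2p7:
  fixes G :: "(complex \<Rightarrow> complex) set"
  assumes "G \<subseteq> class_S"
  shows "compactin lu_topology G \<longleftrightarrow> compactin lu_topology (harmonic_analogue G)"
proof
  note GS = assms
  define GH where "GH = harmonic_analogue G"
  assume cG: "compactin lu_topology G"
  define Gs where "Gs = sat G"
  have GGs: "G \<subseteq> sat Gs" unfolding Gs_def using sat_sup[of G] sat_sup[of "sat G"] by (rule order_trans)
  have cGs: "compactin lu_topology Gs" using compact_transfer[OF cG _ GGs] unfolding Gs_def by simp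
  have clGs: "closedin lu_topology Gs" unfolding Gs_def by (rule sat_closed[OF cG])
  define X where "X = prod_topology lu_topology lu_topology"
  define Psi where "Psi \<epsilon> p = (\<lambda>z. (fst p z + snd p z)/2 + \<epsilon>*((fst p z - snd p z)/2))"
    for \<epsilon> :: complex and p :: "(complex \<Rightarrow> complex) \<times> (complex \<Rightarrow> complex)"
  define Phi where "Phi p = (\<lambda>z. (fst p z + snd p z)/2 + cnj ((fst p z - snd p z)/2))"
    for p :: "(complex \<Rightarrow> complex) \<times> (complex \<Rightarrow> complex)"
  have cPsi: "continuous_map X lu_topology (Psi \<epsilon>)" if "norm \<epsilon> = 1" for \<epsilon>
  proof -
    have "continuous_map X lu_topology
       (\<lambda>p. (\<lambda>z. (\<lambda>x y. (x+y)/2 + \<epsilon>*((x-y)/2)) (fst p z) (snd p z)))"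
      unfolding X_def
    proof (rule cont_lip[where C=1])
      fix x y x' y' :: complex
      show "dist ((\<lambda>x y. (x+y)/2 + \<epsilon>*((x-y)/2)) x y) ((\<lambda>x y. (x+y)/2 + \<epsilon>*((x-y)/2)) x' y') \<le> 1 * (dist x x' + dist y y')"
        using lip_eps[OF that, of x y x' y'] by simp
    qed simp
    then show ?thesis unfolding Psi_def[abs_def] by simp
  qed
  have cPhi: "continuous_map X lu_topology Phi"
  proof -
    have "continuous_map X lu_topology
       (\<lambda>p. (\<lambda>z. (\<lambda>x y. (x+y)/2 + cnj ((x-y)/2)) (fst p z) (snd p z)))"
      unfolding X_def
    proof (rule cont_lip[where C=1])
      fix x y x' y' :: complex
      show "dist ((\<lambda>x y. (x+y)/2 + cnj ((x-y)/2)) x y) ((\<lambda>x y. (x+y)/2 + cnj ((x-y)/2)) x' y') \<le> 1 * (dist x x' + dist y y')"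
        using lip_cnj[of x y x' y'] by simp
    qed simp
    then show ?thesis unfolding Phi_def[abs_def] by simp
  qed
  define P where "P = {p \<in> topspace X. fst p \<in> Gs} \<inter> {p \<in> topspace X. snd p \<in> Gs} \<inter>
      \<Inter>((\<lambda>\<epsilon>. {p \<in> topspace X. Psi \<epsilon> p \<in> Gs}) ` sphere 0 1)"
  have clP: "closedin X P" unfolding P_def
  proof (intro closedin_Int closedin_Inter)
    show "closedin X {p \<in> topspace X. fst p \<in> Gs}"
      unfolding X_def by (rule closedin_continuous_map_preimage[OF continuous_map_fst clGs])
    show "closedin X {p \<in> topspace X. snd p \<in> Gs}"
      unfolding X_def by (rule closedin_continuous_map_preimage[OF continuous_map_snd clGs])
    show "(\<lambda>\<epsilon>. {p \<in> topspace X. Psi \<epsilon> p \<in> Gs}) ` sphere 0 1 \<noteq> {}"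
    proof -
      have "(1::complex) \<in> sphere 0 1" by simp
      then show ?thesis by blast
    qed
    fix S assume "S \<in> (\<lambda>\<epsilon>. {p \<in> topspace X. Psi \<epsilon> p \<in> Gs}) ` sphere 0 1"
    then obtain \<epsilon> where e: "norm \<epsilon> = 1" "S = {p \<in> topspace X. Psi \<epsilon> p \<in> Gs}" by auto
    show "closedin X S" unfolding e(2)
      by (rule closedin_continuous_map_preimage[OF cPsi[OF e(1)] clGs])
  qed
  have cGG: "compactin X (Gs \<times> Gs)" unfolding X_def compactin_Times using cGs by simp
  have PG: "P \<subseteq> Gs \<times> Gs"
  proof
    fix p assume "p \<in> P"
    then have "fst p \<in> Gs \<and> snd p \<in> Gs" unfolding P_def by blast
    then show "p \<in> Gs \<times> Gs" by (simp add: mem_Times_iff)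
  qed
  have cP: "compactin X P" by (rule closed_compactin[OF cGG PG clP])
  have cI: "compactin lu_topology (Phi ` P)" by (rule image_compactin[OF cP cPhi])
  have PhiGH: "Phi p \<in> GH" if "p \<in> P" for p
  proof -
    define a where "a = fst p"
    define b where "b = snd p"
    have p: "p = (a, b)" unfolding a_def b_def by simp
    have a: "a \<in> Gs" "b \<in> Gs" using PG that unfolding a_def b_def by (auto simp: mem_Times_iff)
    have psi: "Psi \<epsilon> p \<in> Gs" if "norm \<epsilon> = 1" for \<epsilon>
    proof -
      have "\<epsilon> \<in> sphere 0 1" using that by simp
      then show ?thesis using \<open>p \<in> P\<close> unfolding P_def by blast
    qed
    obtain a' where a': "a' \<in> G" "agr a a'" using a(1) unfolding Gs_def sat_def by blast
    obtain b' where b': "b' \<in> G" "agr b b'" using a(2) unfolding Gs_def sat_def by blast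
    have ha': "a' holomorphic_on unit_disk" using a'(1) GS unfolding class_S_def by blast
    have hb': "b' holomorphic_on unit_disk" using b'(1) GS unfolding class_S_def by blast
    have H: "(\<lambda>z. (a' z + b' z)/2) holomorphic_on unit_disk" using ha' hb' by (intro holomorphic_intros) simp_all
    have Gh: "(\<lambda>z. (a' z - b' z)/2) holomorphic_on unit_disk" using ha' hb' by (intro holomorphic_intros) simp_all
    have E1: "\<forall>z\<in>unit_disk. Phi p z = (a' z + b' z)/2 + cnj ((a' z - b' z)/2)"
      using a'(2) b'(2) unfolding Phi_def p agr_def by simp
    have E2: "\<forall>\<epsilon>::complex. norm \<epsilon> = 1 \<longrightarrow> (\<exists>\<phi>\<in>G. \<forall>z\<in>unit_disk. \<phi> z = (a' z + b' z)/2 + \<epsilon> * ((a' z - b' z)/2))"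
    proof (intro allI impI)
      fix \<epsilon> :: complex assume "norm \<epsilon> = 1"
      then have "Psi \<epsilon> p \<in> Gs" by (rule psi)
      then obtain \<phi> where ph: "\<phi> \<in> G" "agr (Psi \<epsilon> p) \<phi>" unfolding Gs_def sat_def by blast
      have "\<forall>z\<in>unit_disk. \<phi> z = (a' z + b' z)/2 + \<epsilon> * ((a' z - b' z)/2)"
        using ph(2) a'(2) b'(2) unfolding Psi_def p agr_def by simp
      then show "\<exists>\<phi>\<in>G. \<forall>z\<in>unit_disk. \<phi> z = (a' z + b' z)/2 + \<epsilon> * ((a' z - b' z)/2)"
        using ph(1) by blast
    qed
    show ?thesis unfolding GH_def harmonic_analogue_def
      using H Gh E1 E2
      by (intro CollectI exI[of _ "\<lambda>z. (a' z + b' z)/2"] exI[of _ "\<lambda>z. (a' z - b' z)/2"] conjI)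
  qed
  have sub1: "Phi ` P \<subseteq> sat GH" using PhiGH sat_sup[of GH] by blast
  have sub2: "GH \<subseteq> sat (Phi ` P)"
  proof
    fix f assume "f \<in> GH"
    then obtain h g where hh: "h holomorphic_on unit_disk" and hg: "g holomorphic_on unit_disk"
        and fz: "\<forall>z\<in>unit_disk. f z = h z + cnj (g z)"
        and eps: "\<forall>\<epsilon>::complex. norm \<epsilon> = 1 \<longrightarrow> (\<exists>\<phi>\<in>G. \<forall>z\<in>unit_disk. \<phi> z = h z + \<epsilon> * g z)"
      unfolding GH_def harmonic_analogue_def by blast
    define a where "a = (\<lambda>z. h z + g z)"
    define b where "b = (\<lambda>z. h z - g z)"
    have ps: "Psi \<epsilon> (a, b) = (\<lambda>z. h z + \<epsilon> * g z)" for \<epsilon>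
      unfolding Psi_def a_def b_def by (rule ext) (simp add: field_simps)
    have psG: "Psi \<epsilon> (a, b) \<in> Gs" if e1: "norm \<epsilon> = 1" for \<epsilon>
    proof -
      obtain \<phi> where "\<phi> \<in> G" "\<forall>z\<in>unit_disk. \<phi> z = h z + \<epsilon> * g z" using eps[rule_format, OF e1] by blast
      then have "agr (Psi \<epsilon> (a, b)) \<phi>" unfolding ps agr_def by simp
      then show ?thesis unfolding Gs_def sat_def using \<open>\<phi> \<in> G\<close> by blast
    qed
    have "a = Psi 1 (a, b)" using ps[of 1] unfolding a_def by simp
    then have aG: "a \<in> Gs" using psG[of 1] by simp
    have "b = Psi (-1) (a, b)" using ps[of "-1"] unfolding b_def by simp
    then have bG: "b \<in> Gs" using psG[of "-1"] by simp
    have "(a, b) \<in> P" unfolding P_def X_def using aG bG psG by auto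
    moreover have "Phi (a, b) = (\<lambda>z. h z + cnj (g z))"
      unfolding Phi_def a_def b_def by (rule ext) (simp add: field_simps)
    then have "agr f (Phi (a, b))" using fz unfolding agr_def by simp
    ultimately show "f \<in> sat (Phi ` P)" unfolding sat_def by blast
  qed
  show "compactin lu_topology (harmonic_analogue G)"
    using compact_transfer[OF cI sub2 sub1] unfolding GH_def .
next
  note GS = assms
  define GH where "GH = harmonic_analogue G"
  assume cH: "compactin lu_topology (harmonic_analogue G)"
  then have cH: "compactin lu_topology GH" unfolding GH_def .
  have "sat GH \<subseteq> GH"
  proof
    fix f assume "f \<in> sat GH"
    then obtain f' where "f' \<in> GH" "agr f f'" unfolding sat_def by blast
    then show "f \<in> GH" unfolding GH_def by (rule GH_agr)
  qed
  then have "sat GH = GH" using sat_sup[of GH] by (rule antisym)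
  then have clH: "closedin lu_topology GH" using sat_closed[OF cH] by simp
  have GsubH: "G \<subseteq> GH"
  proof
    fix \<phi> assume ph: "\<phi> \<in> G"
    then have hp: "\<phi> holomorphic_on unit_disk" using GS unfolding class_S_def by blast
    have h0: "(\<lambda>z. 0::complex) holomorphic_on unit_disk" by (rule holomorphic_on_const)
    have E1: "\<forall>z\<in>unit_disk. \<phi> z = \<phi> z + cnj ((\<lambda>z. 0) z)" by simp
    have E2: "\<forall>\<epsilon>::complex. norm \<epsilon> = 1 \<longrightarrow> (\<exists>\<psi>\<in>G. \<forall>z\<in>unit_disk. \<psi> z = \<phi> z + \<epsilon> * (\<lambda>z. 0) z)"
      using ph by auto
    show "\<phi> \<in> GH" unfolding GH_def harmonic_analogue_def
      using hp h0 E1 E2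
      by (intro CollectI exI[of _ "\<phi>"] exI[of _ "\<lambda>z. 0::complex"] conjI)
  qed
  define D where "D = lu_topology closure_of G"
  have DH: "D \<subseteq> GH" unfolding D_def by (rule closure_of_minimal[OF GsubH clH])
  have cD: "compactin lu_topology D" using cH DH closedin_closure_of unfolding D_def
    by (rule closed_compactin)
  have GD: "G \<subseteq> D" unfolding D_def by (rule closure_of_subset) simp
  have DG: "D \<subseteq> sat G"
  proof
    fix f assume fD: "f \<in> D"
    have "f holomorphic_on unit_disk" using closure_holo[OF GS] fD unfolding D_def by blast
    moreover have "f \<in> harmonic_analogue G" using fD DH unfolding GH_def by blast
    ultimately show "f \<in> sat G" using key_in_sat[OF GS] by blast
  qed
  have "G \<subseteq> sat D" using GD sat_sup[of D] by (rule order_trans)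
  then show "compactin lu_topology G" by (rule compact_transfer[OF cD _ DG])
qed


end
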